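(* Let $d,p,n$ be positive integers and let $V_1,\dots,V_n$ be i.i.d. random $d\times dp$ matrices with i.i.d. real $\mathcal{N}(0,\frac1{dp})$ entries. For any $d$ and $\varepsilon>0$ there exist $p_0$ and $n_0$ such that for any $p>p_0$ and $n>n_0$, \[ \max_{O_1,\dots,O_n \in \mathcal{O}_d}\left\|\frac1n\sum_{i=1}^n O_i^T V_i \right\|_F^2 \leq \frac{d}p\alpha_{\mathbb{R}}(d)^2 + \varepsilon \] with probability strictly larger than $1/2$.
   Context: $\mathcal{O}_d$ is the group of real $d\times d$ orthogonal matrices. For $G\in\mathbb{R}^{d\times d}$ with i.i.d. real $\mathcal{N}(0,d^{-1})$ entries, $\alpha_{\mathbb{R}}(d)=\mathbb{E}\left[\frac1d\sum_{j=1}^d\sigma_j(G)\right]$, where $\sigma_j$ is the $j$-th singular value. *)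

theory Defs
  imports "HOL-Probability.Probability" "Jordan_Normal_Form.Char_Poly"
begin

definition orth_group :: "nat \<Rightarrow> real mat set" where
  "orth_group d = {Q. Q \<in> carrier_mat d d \<and> transpose_mat Q * Q = 1\<^sub>m d}"

definition frob_sq :: "real mat \<Rightarrow> real" where
  "frob_sq A = (\<Sum>i<dim_row A. \<Sum>j<dim_col A. (A $$ (i,j))\<^sup>2)"

(* Sum of the singular values of G: singular values are the square roots of
   the eigenvalues of G^T G, counted with (algebraic) multiplicity. *)
definition sum_singular_values :: "real mat \<Rightarrow> real" where
  "sum_singular_values G =
     (let q = char_poly (transpose_mat G * G)
      in \<Sum>x\<in>{x. poly q x = 0}. real (order x q) * sqrt x)"

definition gauss_field :: "'i set \<Rightarrow> real \<Rightarrow> ('i \<Rightarrow> real) measure" where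
  "gauss_field I var = PiM I (\<lambda>_. density lborel (normal_density 0 (sqrt var)))"

definition alpha_R :: "nat \<Rightarrow> real" where
  "alpha_R d = integral\<^sup>L (gauss_field ({..<d} \<times> {..<d}) (1 / real d))
      (\<lambda>g. (1 / real d) * sum_singular_values (mat d d g))"

definition Vmat :: "nat \<Rightarrow> nat \<Rightarrow> (nat \<times> nat \<times> nat \<Rightarrow> real) \<Rightarrow> nat \<Rightarrow> real mat" where
  "Vmat d p w i = mat d (d * p) (\<lambda>(a, b). w (i, a, b))"

definition aligned_sq :: "nat \<Rightarrow> nat \<Rightarrow> nat \<Rightarrow> (nat \<Rightarrow> real mat) \<Rightarrow> (nat \<times> nat \<times> nat \<Rightarrow> real) \<Rightarrow> real" where
  "aligned_sq d p n Os w =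
     frob_sq (mat d (d * p) (\<lambda>(a, b). (1 / real n) *
       (\<Sum>i<n. (transpose_mat (Os i) * Vmat d p w i) $$ (a, b))))"

end

theory Submission
  imports Defs
begin

lemma aligned_sq_eq:
  assumes "\<forall>i<n. Os i \<in> carrier_mat d d"
  shows "aligned_sq d p n Os w = (\<Sum>a<d. \<Sum>b<d*p. ((1/real n) * (\<Sum>i<n. \<Sum>k<d. Os i $$ (k,a) * w (i,k,b)))\<^sup>2)"
proof -
  have e: "(transpose_mat (Os i) * Vmat d p w i) $$ (a, b) = (\<Sum>k<d. Os i $$ (k,a) * w (i,k,b))"
    if "i < n" "a < d" "b < d * p" for i a b
  proof -
    have c: "Os i \<in> carrier_mat d d" using assms that by auto
    show ?thesis using c that
      by (simp add: Vmat_def scalar_prod_def lessThan_atLeast0 col_def row_def)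
  qed
  show ?thesis unfolding aligned_sq_def frob_sq_def
    by (auto simp: e intro!: sum.cong)
qed

definition Sfun :: "nat \<Rightarrow> nat \<Rightarrow> nat \<Rightarrow> (nat \<times> nat \<times> nat \<Rightarrow> real) \<Rightarrow> real" where
  "Sfun d p n w = (\<Sum>r\<in>{..<n}\<times>{..<d}. \<Sum>s\<in>{..<n}\<times>{..<d}.
      (\<Sum>b<d*p. w (fst r, snd r, b) * w (fst s, snd s, b))\<^sup>2)"

lemma orth_col:
  assumes "Q \<in> orth_group d" "a < d"
  shows "(\<Sum>k<d. (Q $$ (k,a))\<^sup>2) = 1"
proof -
  have c: "Q \<in> carrier_mat d d" and t: "transpose_mat Q * Q = 1\<^sub>m d" using assms by (auto simp: orth_group_def)
  have "(transpose_mat Q * Q) $$ (a,a) = 1" using t assms by simp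
  then show ?thesis using c assms
    by (simp add: scalar_prod_def lessThan_atLeast0 col_def row_def power2_eq_square)
qed

lemma det_bound_a:
  fixes u :: "nat \<times> nat \<Rightarrow> real" and W :: "nat \<times> nat \<Rightarrow> nat \<Rightarrow> real"
  assumes "finite R" "finite B"
  shows "(\<Sum>b\<in>B. (\<Sum>r\<in>R. u r * W r b)\<^sup>2) \<le> (\<Sum>r\<in>R. (u r)\<^sup>2) *
      sqrt (\<Sum>r\<in>R. \<Sum>s\<in>R. (\<Sum>b\<in>B. W r b * W s b)\<^sup>2)"
proof -
  have "(\<Sum>b\<in>B. (\<Sum>r\<in>R. u r * W r b)\<^sup>2) = (\<Sum>b\<in>B. \<Sum>r\<in>R. \<Sum>s\<in>R. u r * W r b * (u s * W s b))"
    by (simp add: power2_eq_square sum_product)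
  also have "\<dots> = (\<Sum>r\<in>R. \<Sum>b\<in>B. \<Sum>s\<in>R. u r * W r b * (u s * W s b))"
    by (rule sum.swap)
  also have "\<dots> = (\<Sum>r\<in>R. \<Sum>s\<in>R. \<Sum>b\<in>B. u r * W r b * (u s * W s b))"
    by (rule sum.cong[OF refl], rule sum.swap)
  also have "\<dots> = (\<Sum>r\<in>R. \<Sum>s\<in>R. (u r * u s) * (\<Sum>b\<in>B. W r b * W s b))"
    by (simp add: sum_distrib_left mult_ac)
  also have "\<dots> = (\<Sum>q\<in>R\<times>R. (u (fst q) * u (snd q)) * (\<Sum>b\<in>B. W (fst q) b * W (snd q) b))"
    unfolding sum.cartesian_product' by simp
  finally have eq: "(\<Sum>b\<in>B. (\<Sum>r\<in>R. u r * W r b)\<^sup>2) = \<dots>" .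
  let ?Y = "(\<Sum>q\<in>R\<times>R. (u (fst q) * u (snd q)) * (\<Sum>b\<in>B. W (fst q) b * W (snd q) b))"
  have cs: "?Y\<^sup>2 \<le> (\<Sum>q\<in>R\<times>R. (u (fst q) * u (snd q))\<^sup>2) * (\<Sum>q\<in>R\<times>R. (\<Sum>b\<in>B. W (fst q) b * W (snd q) b)\<^sup>2)"
    by (rule Cauchy_Schwarz_ineq_sum)
  have p1: "(\<Sum>q\<in>R\<times>R. (u (fst q) * u (snd q))\<^sup>2) = (\<Sum>r\<in>R. (u r)\<^sup>2)\<^sup>2"
  proof -
    have "(\<Sum>q\<in>R\<times>R. (u (fst q) * u (snd q))\<^sup>2) = (\<Sum>r\<in>R. \<Sum>s\<in>R. (u r)\<^sup>2 * (u s)\<^sup>2)"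
      unfolding sum.cartesian_product' by (simp add: power_mult_distrib)
    also have "\<dots> = (\<Sum>r\<in>R. (u r)\<^sup>2) * (\<Sum>r\<in>R. (u r)\<^sup>2)"
      by (rule sum_product[symmetric])
    finally show ?thesis by (simp add: power2_eq_square)
  qed
  have p2: "(\<Sum>q\<in>R\<times>R. (\<Sum>b\<in>B. W (fst q) b * W (snd q) b)\<^sup>2) = (\<Sum>r\<in>R. \<Sum>s\<in>R. (\<Sum>b\<in>B. W r b * W s b)\<^sup>2)"
    unfolding sum.cartesian_product' by simp
  have "?Y \<le> sqrt (?Y\<^sup>2)" by simp
  also have "\<dots> \<le> sqrt ((\<Sum>r\<in>R. (u r)\<^sup>2)\<^sup>2 * (\<Sum>r\<in>R. \<Sum>s\<in>R. (\<Sum>b\<in>B. W r b * W s b)\<^sup>2))"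
    using cs p1 p2 by (intro real_sqrt_le_mono) simp
  also have "\<dots> = (\<Sum>r\<in>R. (u r)\<^sup>2) * sqrt (\<Sum>r\<in>R. \<Sum>s\<in>R. (\<Sum>b\<in>B. W r b * W s b)\<^sup>2)"
    by (simp add: real_sqrt_mult sum_nonneg)
  finally show ?thesis using eq by simp
qed

lemma det_bound:
  assumes "\<forall>i<n. Os i \<in> orth_group d" "n > 0"
  shows "aligned_sq d p n Os w \<le> real d / real n * sqrt (Sfun d p n w)"
proof -
  let ?R = "{..<n}\<times>{..<d}"
  have c: "\<forall>i<n. Os i \<in> carrier_mat d d" using assms by (auto simp: orth_group_def)
  have each: "(\<Sum>b<d*p. ((1/real n) * (\<Sum>i<n. \<Sum>k<d. Os i $$ (k,a) * w (i,k,b)))\<^sup>2)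
     \<le> 1 / real n * sqrt (Sfun d p n w)" if a: "a < d" for a
  proof -
    define u where "u r = Os (fst r) $$ (snd r, a) / real n" for r
    define W where "W r b = w (fst r, snd r, b)" for r b
    have i1: "(1/real n) * (\<Sum>i<n. \<Sum>k<d. Os i $$ (k,a) * w (i,k,b)) = (\<Sum>r\<in>?R. u r * W r b)" for b
      by (simp add: u_def W_def sum.cartesian_product' sum_distrib_left)
    have i2: "(\<Sum>r\<in>?R. (u r)\<^sup>2) = 1 / real n"
    proof -
      have "(\<Sum>r\<in>?R. (u r)\<^sup>2) = (\<Sum>i<n. (\<Sum>k<d. (Os i $$ (k,a))\<^sup>2) / (real n)\<^sup>2)"
        by (simp add: u_def sum.cartesian_product' power_divide sum_divide_distrib)
      also have "\<dots> = (\<Sum>i<n. 1 / (real n)\<^sup>2)"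
        using orth_col assms a by (intro sum.cong) auto
      also have "\<dots> = 1 / real n" using assms by (simp add: power2_eq_square)
      finally show ?thesis .
    qed
    show ?thesis
      using det_bound_a[of ?R "{..<d*p}" u W] i1 i2
      by (simp add: Sfun_def W_def)
  qed
  have "aligned_sq d p n Os w \<le> (\<Sum>a<d. 1 / real n * sqrt (Sfun d p n w))"
    unfolding aligned_sq_eq[OF c] by (rule sum_mono) (use each in auto)
  also have "\<dots> = real d / real n * sqrt (Sfun d p n w)" by simp
  finally show ?thesis .
qed


definition N0 :: "real \<Rightarrow> real measure" where
  "N0 \<sigma> = density lborel (normal_density 0 \<sigma>)"

lemma N0_prob: "\<sigma> > 0 \<Longrightarrow> prob_space (N0 \<sigma>)"
  unfolding N0_def by (rule prob_space_normal_density)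

lemma N0_sets[simp]: "sets (N0 \<sigma>) = sets borel"
  by (simp add: N0_def)

lemma N0_space[simp]: "space (N0 \<sigma>) = UNIV"
  by (simp add: N0_def)

lemma N0_int_pow: "\<sigma> > 0 \<Longrightarrow> integrable (N0 \<sigma>) (\<lambda>t. t ^ k)"
  unfolding N0_def
  using integrable_normal_moment[of \<sigma> 0 k]
  by (subst integrable_density) (auto simp: normal_density_nonneg)

lemma N0_mom_even: "\<sigma> > 0 \<Longrightarrow> integral\<^sup>L (N0 \<sigma>) (\<lambda>t. t ^ (2*k)) = fact (2 * k) / ((2 / \<sigma>\<^sup>2)^k * fact k)"
  unfolding N0_def
  using integral_normal_moment_even[of \<sigma> 0 k]
  by (subst integral_density) (auto simp: normal_density_nonneg)

lemma N0_mom_odd: "\<sigma> > 0 \<Longrightarrow> integral\<^sup>L (N0 \<sigma>) (\<lambda>t. t ^ (2*k+1)) = 0"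
  unfolding N0_def
  using integral_normal_moment_odd[of \<sigma> 0 k]
  by (subst integral_density) (auto simp: normal_density_nonneg)

lemma N0_mom1: "\<sigma> > 0 \<Longrightarrow> integral\<^sup>L (N0 \<sigma>) (\<lambda>t. t) = 0"
  using N0_mom_odd[of \<sigma> 0] by simp

lemma N0_mom4: "\<sigma> > 0 \<Longrightarrow> integral\<^sup>L (N0 \<sigma>) (\<lambda>t. t ^ 4) = 3 * \<sigma>^4"
  using N0_mom_even[of \<sigma> 2] by (simp add: fact_numeral power2_eq_square field_simps power4_eq_xxxx)

lemma N0_psf: "\<sigma> > 0 \<Longrightarrow> product_sigma_finite (\<lambda>_. N0 \<sigma>)"
  unfolding product_sigma_finite_def
  using N0_prob prob_space_imp_sigma_finite by blast

lemma E_prod: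
  fixes g :: "_ \<Rightarrow> real \<Rightarrow> real"
  assumes "\<sigma> > 0" "finite I" "\<And>x. x \<in> I \<Longrightarrow> integrable (N0 \<sigma>) (g x)"
  shows "integrable (PiM I (\<lambda>_. N0 \<sigma>)) (\<lambda>w. \<Prod>x\<in>I. g x (w x))"
    "integral\<^sup>L (PiM I (\<lambda>_. N0 \<sigma>)) (\<lambda>w. \<Prod>x\<in>I. g x (w x)) = (\<Prod>x\<in>I. integral\<^sup>L (N0 \<sigma>) (g x))"
  using product_sigma_finite.product_integrable_prod[OF N0_psf[OF assms(1)], of I g]
    product_sigma_finite.product_integral_prod[OF N0_psf[OF assms(1)], of I g] assms
  by auto

lemma E_pow4:
  assumes "\<sigma> > 0" "finite I" "a \<in> I"
  shows "integrable (PiM I (\<lambda>_. N0 \<sigma>)) (\<lambda>w. (w a)^4)"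
    "integral\<^sup>L (PiM I (\<lambda>_. N0 \<sigma>)) (\<lambda>w. (w a)^4) = 3 * \<sigma>^4"
proof -
  define g where "g x = (\<lambda>t::real. if x = a then t^4 else 1)" for x
  have gi: "integrable (N0 \<sigma>) (g x)" if "x \<in> I" for x
    using N0_int_pow[OF assms(1), of 4] N0_int_pow[OF assms(1), of 0] by (cases "x = a") (auto simp: g_def)
  have eq: "(\<Prod>x\<in>I. g x (w x)) = (w a)^4" for w
    using assms by (simp add: g_def prod.delta)
  have eq2: "(\<Prod>x\<in>I. integral\<^sup>L (N0 \<sigma>) (g x)) = 3 * \<sigma>^4"
  proof -
    have "prob_space (N0 \<sigma>)" using N0_prob assms by blast
    then have "measure (N0 \<sigma>) (space (N0 \<sigma>)) = 1" by (rule prob_space.prob_space)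
    then have "integral\<^sup>L (N0 \<sigma>) (\<lambda>t. 1::real) = 1" by simp
    then have "integral\<^sup>L (N0 \<sigma>) (g x) = (if x = a then 3 * \<sigma>^4 else 1)" for x
      using N0_mom4[OF assms(1)] by (cases "x = a") (simp_all add: g_def)
    then show ?thesis using assms by (simp add: prod.delta)
  qed
  have P1: "integrable (PiM I (\<lambda>_. N0 \<sigma>)) (\<lambda>w. \<Prod>x\<in>I. g x (w x))"
    by (rule E_prod(1)[OF assms(1,2)]) (rule gi)
  have P2: "integral\<^sup>L (PiM I (\<lambda>_. N0 \<sigma>)) (\<lambda>w. \<Prod>x\<in>I. g x (w x)) = (\<Prod>x\<in>I. integral\<^sup>L (N0 \<sigma>) (g x))"
    by (rule E_prod(2)[OF assms(1,2)]) (rule gi)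
  show "integrable (PiM I (\<lambda>_. N0 \<sigma>)) (\<lambda>w. (w a)^4)"
    using P1 eq by simp
  show "integral\<^sup>L (PiM I (\<lambda>_. N0 \<sigma>)) (\<lambda>w. (w a)^4) = 3 * \<sigma>^4"
    using P2 eq eq2 by simp
qed

lemma E_distinct4:
  assumes "\<sigma> > 0" "finite I" "a \<in> I" "b \<in> I" "c \<in> I" "e \<in> I" "distinct [a,b,c,e]"
  shows "integrable (PiM I (\<lambda>_. N0 \<sigma>)) (\<lambda>w. w a * w b * w c * w e)"
    "integral\<^sup>L (PiM I (\<lambda>_. N0 \<sigma>)) (\<lambda>w. w a * w b * w c * w e) = 0"
proof -
  define g where "g x = (\<lambda>t::real. if x \<in> {a,b,c,e} then t else 1)" for x
  have gi: "integrable (N0 \<sigma>) (g x)" if "x \<in> I" for x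
    using N0_int_pow[OF assms(1), of 1] N0_int_pow[OF assms(1), of 0] by (cases "x \<in> {a,b,c,e}") (auto simp: g_def)
  have eq: "(\<Prod>x\<in>I. g x (w x)) = w a * w b * w c * w e" for w
  proof -
    have "(\<Prod>x\<in>I. g x (w x)) = (\<Prod>x\<in>I. if x \<in> {a,b,c,e} then w x else 1)"
      by (simp only: g_def)
    also have "\<dots> = (\<Prod>x\<in>I \<inter> {a,b,c,e}. w x)"
      by (rule prod.inter_restrict[OF assms(2), symmetric])
    also have "I \<inter> {a,b,c,e} = {a,b,c,e}" using assms by auto
    finally show ?thesis using assms by (simp add: mult_ac)
  qed
  have eq2: "(\<Prod>x\<in>I. integral\<^sup>L (N0 \<sigma>) (g x)) = 0"
    using assms N0_mom1[OF assms(1)] by (intro prod_zero) (auto simp: g_def intro!: bexI[of _ a])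
  have P1: "integrable (PiM I (\<lambda>_. N0 \<sigma>)) (\<lambda>w. \<Prod>x\<in>I. g x (w x))"
    by (rule E_prod(1)[OF assms(1,2)]) (rule gi)
  have P2: "integral\<^sup>L (PiM I (\<lambda>_. N0 \<sigma>)) (\<lambda>w. \<Prod>x\<in>I. g x (w x)) = (\<Prod>x\<in>I. integral\<^sup>L (N0 \<sigma>) (g x))"
    by (rule E_prod(2)[OF assms(1,2)]) (rule gi)
  show "integrable (PiM I (\<lambda>_. N0 \<sigma>)) (\<lambda>w. w a * w b * w c * w e)"
    using P1 eq by simp
  show "integral\<^sup>L (PiM I (\<lambda>_. N0 \<sigma>)) (\<lambda>w. w a * w b * w c * w e) = 0"
    using P2 eq eq2 by simp
qed

lemma amgm4: "\<bar>(x1::real) * x2 * x3 * x4\<bar> \<le> (x1^4 + x2^4 + x3^4 + x4^4) / 4"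
proof -
  have q: "\<bar>u * v\<bar> \<le> (u^2 + v^2)/2" for u v :: real
  proof -
    have "0 \<le> (\<bar>u\<bar> - \<bar>v\<bar>)^2" by simp
    then show ?thesis by (simp add: power2_diff abs_mult power2_abs)
  qed
  have r: "(u + v)^2 \<le> 2 * (u^2 + v^2)" for u v :: real
  proof -
    have "0 \<le> (u - v)^2" by simp
    then show ?thesis by (simp add: power2_diff power2_sum)
  qed
  have "\<bar>x1 * x2 * x3 * x4\<bar> = \<bar>x1 * x2\<bar> * \<bar>x3 * x4\<bar>" by (simp add: abs_mult)
  also have "\<dots> \<le> ((x1^2 + x2^2)/2) * ((x3^2 + x4^2)/2)"
    using q[of x1 x2] q[of x3 x4] by (intro mult_mono) auto
  also have "\<dots> \<le> (((x1^2 + x2^2)/2)^2 + ((x3^2 + x4^2)/2)^2) / 2"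
    using q[of "(x1^2 + x2^2)/2" "(x3^2 + x4^2)/2"] by simp
  also have "\<dots> = ((x1^2 + x2^2)^2 + (x3^2 + x4^2)^2) / 8"
    by (simp add: power_divide)
  also have "\<dots> \<le> (2 * ((x1^2)^2 + (x2^2)^2) + 2 * ((x3^2)^2 + (x4^2)^2)) / 8"
    using r[of "x1^2" "x2^2"] r[of "x3^2" "x4^2"] by simp
  also have "\<dots> = (x1^4 + x2^4 + x3^4 + x4^4) / 4"
    by (simp add: power_mult[symmetric])
  finally show ?thesis .
qed


lemma comp_meas:
  assumes "x \<in> I"
  shows "(\<lambda>w. w x) \<in> borel_measurable (PiM I (\<lambda>_. N0 \<sigma>))"
proof -
  have "(\<lambda>w. w x) \<in> measurable (PiM I (\<lambda>_. N0 \<sigma>)) (N0 \<sigma>)"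
    by (rule measurable_component_singleton[OF assms])
  then show ?thesis using measurable_cong_sets[OF refl N0_sets[of \<sigma>], of "PiM I (\<lambda>_. N0 \<sigma>)"] by simp
qed

lemma T_bound:
  assumes "\<sigma> > 0" "finite I" "p1 \<in> I" "p2 \<in> I" "p3 \<in> I" "p4 \<in> I"
  shows "integrable (PiM I (\<lambda>_. N0 \<sigma>)) (\<lambda>w. w p1 * w p2 * w p3 * w p4)"
    "integral\<^sup>L (PiM I (\<lambda>_. N0 \<sigma>)) (\<lambda>w. w p1 * w p2 * w p3 * w p4) \<le> 3 * \<sigma>^4"
proof -
  let ?M = "PiM I (\<lambda>_. N0 \<sigma>)"
  let ?B = "\<lambda>w. ((w p1)^4 + (w p2)^4 + (w p3)^4 + (w p4)^4) / 4"
  have iB: "integrable ?M ?B"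
    using E_pow4(1)[OF assms(1,2)] assms by auto
  have eB: "integral\<^sup>L ?M ?B = 3 * \<sigma>^4"
    using E_pow4[OF assms(1,2)] assms by (simp add: integral_add)
  have m: "(\<lambda>w. w p1 * w p2 * w p3 * w p4) \<in> borel_measurable ?M"
    using comp_meas[OF assms(3)] comp_meas[OF assms(4)] comp_meas[OF assms(5)] comp_meas[OF assms(6)]
    by (intro borel_measurable_times) auto
  have le: "\<bar>w p1 * w p2 * w p3 * w p4\<bar> \<le> ?B w" for w :: "_ \<Rightarrow> real" by (rule amgm4)
  show iT: "integrable ?M (\<lambda>w. w p1 * w p2 * w p3 * w p4)"
    by (rule Bochner_Integration.integrable_bound[OF iB m]) (use le in \<open>auto intro: order.trans[OF _ abs_ge_self]\<close>)
  have le2: "w p1 * w p2 * w p3 * w p4 \<le> ?B w" for w :: "_ \<Rightarrow> real"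
    using le[of w] abs_ge_self[of "w p1 * w p2 * w p3 * w p4"] by linarith
  have "integral\<^sup>L ?M (\<lambda>w. w p1 * w p2 * w p3 * w p4) \<le> integral\<^sup>L ?M ?B"
    by (rule integral_mono[OF iT iB]) (rule le2)
  then show "integral\<^sup>L (PiM I (\<lambda>_. N0 \<sigma>)) (\<lambda>w. w p1 * w p2 * w p3 * w p4) \<le> 3 * \<sigma>^4"
    using eB by simp
qed

definition Tt :: "nat \<times> nat \<Rightarrow> nat \<times> nat \<Rightarrow> nat \<Rightarrow> nat \<Rightarrow> (nat \<times> nat \<times> nat \<Rightarrow> real) \<Rightarrow> real" where
  "Tt r s b b' w = w (fst r, snd r, b) * w (fst s, snd s, b) * w (fst r, snd r, b') * w (fst s, snd s, b')"

lemma Tt_bound: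
  assumes "\<sigma> > 0" "r \<in> {..<n}\<times>{..<d}" "s \<in> {..<n}\<times>{..<d}" "b < m" "b' < m"
  shows "integrable (PiM ({..<n}\<times>{..<d}\<times>{..<m}) (\<lambda>_. N0 \<sigma>)) (Tt r s b b')"
    "integral\<^sup>L (PiM ({..<n}\<times>{..<d}\<times>{..<m}) (\<lambda>_. N0 \<sigma>)) (Tt r s b b')
       \<le> ((if r = s then 3 * \<sigma>^4 else 0) + (if b = b' then 3 * \<sigma>^4 else 0))"
proof -
  let ?I = "{..<n}\<times>{..<d}\<times>{..<m}"
  have fin: "finite ?I" by simp
  have pts: "(fst r, snd r, b) \<in> ?I" "(fst s, snd s, b) \<in> ?I" "(fst r, snd r, b') \<in> ?I" "(fst s, snd s, b') \<in> ?I"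
    using assms by (auto simp: mem_Times_iff)
  show "integrable (PiM ?I (\<lambda>_. N0 \<sigma>)) (Tt r s b b')"
    unfolding Tt_def by (rule T_bound(1)[OF assms(1) fin pts])
  have g: "integral\<^sup>L (PiM ?I (\<lambda>_. N0 \<sigma>)) (Tt r s b b') \<le> 3 * \<sigma>^4"
    unfolding Tt_def by (rule T_bound(2)[OF assms(1) fin pts])
  show "integral\<^sup>L (PiM ?I (\<lambda>_. N0 \<sigma>)) (Tt r s b b')
       \<le> ((if r = s then 3 * \<sigma>^4 else 0) + (if b = b' then 3 * \<sigma>^4 else 0))"
  proof (cases "r \<noteq> s \<and> b \<noteq> b'")
    case True
    have rs: "(fst r, snd r) \<noteq> (fst s, snd s)" using True by simp
    have "distinct [(fst r, snd r, b), (fst s, snd s, b), (fst r, snd r, b'), (fst s, snd s, b')]"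
      using True rs by (auto simp: prod_eq_iff)
    then have "integral\<^sup>L (PiM ?I (\<lambda>_. N0 \<sigma>)) (Tt r s b b') = 0"
      unfolding Tt_def by (rule E_distinct4(2)[OF assms(1) fin pts])
    then show ?thesis using True by simp
  next
    case False
    have "3 * \<sigma>^4 \<le> ((if r = s then 3 * \<sigma>^4 else 0) + (if b = b' then 3 * \<sigma>^4 else 0))"
      using False assms(1) by auto
    then show ?thesis using g by linarith
  qed
qed

lemma Sfun_expand:
  "Sfun d p n w = (\<Sum>r\<in>{..<n}\<times>{..<d}. \<Sum>s\<in>{..<n}\<times>{..<d}. \<Sum>b<d*p. \<Sum>b'<d*p. Tt r s b b' w)"
  unfolding Sfun_def Tt_def by (simp add: power2_eq_square sum_product mult_ac)

lemma sd1: "finite R \<Longrightarrow> finite B \<Longrightarrow> (\<Sum>r\<in>R. \<Sum>s\<in>R. \<Sum>b\<in>B. \<Sum>b'\<in>B. (if r = s then c else 0)) = real (card R) * real (card B)^2 * (c::real)"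
proof -
  assume f: "finite R" "finite B"
  have "(\<Sum>r\<in>R. \<Sum>s\<in>R. \<Sum>b\<in>B. \<Sum>b'\<in>B. (if r = s then c else 0)) = (\<Sum>r\<in>R. \<Sum>s\<in>R. (if r = s then real (card B)^2 * c else 0))"
    by (intro sum.cong refl) (simp add: power2_eq_square)
  also have "\<dots> = (\<Sum>r\<in>R. real (card B)^2 * c)"
    using f by (intro sum.cong refl) (simp add: sum.delta)
  finally show ?thesis by (simp add: mult_ac)
qed
lemma sd2: "finite R \<Longrightarrow> finite B \<Longrightarrow> (\<Sum>r\<in>R. \<Sum>s\<in>R. \<Sum>b\<in>B. \<Sum>b'\<in>B. (if b = b' then c else 0)) = real (card R)^2 * real (card B) * (c::real)"
proof -
  assume f: "finite R" "finite B"
  have "(\<Sum>b\<in>B. \<Sum>b'\<in>B. (if b = b' then c else 0)) = (\<Sum>b\<in>B. c)"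
    using f by (intro sum.cong refl) (simp add: sum.delta)
  then show ?thesis by (simp add: power2_eq_square mult_ac)
qed

lemma int_sum4:
  fixes f :: "'i \<Rightarrow> 'i \<Rightarrow> 'j \<Rightarrow> 'j \<Rightarrow> 'a \<Rightarrow> real"
  assumes "\<And>r s b b'. r\<in>A \<Longrightarrow> s\<in>A \<Longrightarrow> b\<in>B \<Longrightarrow> b'\<in>B \<Longrightarrow> integrable M (f r s b b')"
  shows "integrable M (\<lambda>w. \<Sum>r\<in>A. \<Sum>s\<in>A. \<Sum>b\<in>B. \<Sum>b'\<in>B. f r s b b' w)"
    "integral\<^sup>L M (\<lambda>w. \<Sum>r\<in>A. \<Sum>s\<in>A. \<Sum>b\<in>B. \<Sum>b'\<in>B. f r s b b' w)
      = (\<Sum>r\<in>A. \<Sum>s\<in>A. \<Sum>b\<in>B. \<Sum>b'\<in>B. integral\<^sup>L M (f r s b b'))"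
proof -
  have i1: "integrable M (\<lambda>w. \<Sum>b'\<in>B. f r s b b' w)" if "r\<in>A" "s\<in>A" "b\<in>B" for r s b
    using that by (intro Bochner_Integration.integrable_sum assms) auto
  have i2: "integrable M (\<lambda>w. \<Sum>b\<in>B. \<Sum>b'\<in>B. f r s b b' w)" if "r\<in>A" "s\<in>A" for r s
    using that by (intro Bochner_Integration.integrable_sum i1) auto
  have i3: "integrable M (\<lambda>w. \<Sum>s\<in>A. \<Sum>b\<in>B. \<Sum>b'\<in>B. f r s b b' w)" if "r\<in>A" for r
    using that by (intro Bochner_Integration.integrable_sum i2) auto
  show "integrable M (\<lambda>w. \<Sum>r\<in>A. \<Sum>s\<in>A. \<Sum>b\<in>B. \<Sum>b'\<in>B. f r s b b' w)"
    by (intro Bochner_Integration.integrable_sum i3) auto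
  have "integral\<^sup>L M (\<lambda>w. \<Sum>r\<in>A. \<Sum>s\<in>A. \<Sum>b\<in>B. \<Sum>b'\<in>B. f r s b b' w)
      = (\<Sum>r\<in>A. integral\<^sup>L M (\<lambda>w. \<Sum>s\<in>A. \<Sum>b\<in>B. \<Sum>b'\<in>B. f r s b b' w))"
    using i3 by (rule Bochner_Integration.integral_sum)
  also have "\<dots> = (\<Sum>r\<in>A. \<Sum>s\<in>A. integral\<^sup>L M (\<lambda>w. \<Sum>b\<in>B. \<Sum>b'\<in>B. f r s b b' w))"
    by (intro sum.cong refl Bochner_Integration.integral_sum i2) auto
  also have "\<dots> = (\<Sum>r\<in>A. \<Sum>s\<in>A. \<Sum>b\<in>B. integral\<^sup>L M (\<lambda>w. \<Sum>b'\<in>B. f r s b b' w))"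
    by (intro sum.cong refl Bochner_Integration.integral_sum i1) auto
  also have "\<dots> = (\<Sum>r\<in>A. \<Sum>s\<in>A. \<Sum>b\<in>B. \<Sum>b'\<in>B. integral\<^sup>L M (f r s b b'))"
    by (intro sum.cong refl Bochner_Integration.integral_sum assms) auto
  finally show "integral\<^sup>L M (\<lambda>w. \<Sum>r\<in>A. \<Sum>s\<in>A. \<Sum>b\<in>B. \<Sum>b'\<in>B. f r s b b' w)
      = (\<Sum>r\<in>A. \<Sum>s\<in>A. \<Sum>b\<in>B. \<Sum>b'\<in>B. integral\<^sup>L M (f r s b b'))" .
qed

lemma ES_bound:
  assumes "\<sigma> > 0"
  shows "integrable (PiM ({..<n}\<times>{..<d}\<times>{..<d*p}) (\<lambda>_. N0 \<sigma>)) (Sfun d p n)"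
    "integral\<^sup>L (PiM ({..<n}\<times>{..<d}\<times>{..<d*p}) (\<lambda>_. N0 \<sigma>)) (Sfun d p n)
       \<le> 3 * \<sigma>^4 * (real (n*d) * real (d*p)^2 + real (n*d)^2 * real (d*p))"
proof -
  let ?M = "PiM ({..<n}\<times>{..<d}\<times>{..<d*p}) (\<lambda>_. N0 \<sigma>)"
  let ?R = "{..<n}\<times>{..<d}"
  have fe: "Sfun d p n = (\<lambda>w. \<Sum>r\<in>?R. \<Sum>s\<in>?R. \<Sum>b<d*p. \<Sum>b'<d*p. Tt r s b b' w)"
    using Sfun_expand by blast
  have ti: "\<And>r s b b'. r\<in>?R \<Longrightarrow> s\<in>?R \<Longrightarrow> b<d*p \<Longrightarrow> b'<d*p \<Longrightarrow> integrable ?M (Tt r s b b')"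
    using Tt_bound(1)[OF assms] by blast
  have ti2: "\<And>r s b b'. r\<in>?R \<Longrightarrow> s\<in>?R \<Longrightarrow> b<d*p \<Longrightarrow> b'<d*p \<Longrightarrow>
     integral\<^sup>L ?M (Tt r s b b') \<le> ((if r = s then 3 * \<sigma>^4 else 0) + (if b = b' then 3 * \<sigma>^4 else 0))"
    using Tt_bound(2)[OF assms] by blast
  show "integrable ?M (Sfun d p n)"
    unfolding fe by (rule int_sum4(1)) (rule ti, auto)
  have "integral\<^sup>L ?M (Sfun d p n) = (\<Sum>r\<in>?R. \<Sum>s\<in>?R. \<Sum>b<d*p. \<Sum>b'<d*p. integral\<^sup>L ?M (Tt r s b b'))"
    unfolding fe by (rule int_sum4(2)) (rule ti, auto)
  also have "\<dots> \<le> (\<Sum>r\<in>?R. \<Sum>s\<in>?R. \<Sum>b<d*p. \<Sum>b'<d*p. ((if r = s then 3 * \<sigma>^4 else 0) + (if b = b' then 3 * \<sigma>^4 else 0)))"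
    using ti2 by (intro sum_mono) auto
  also have "\<dots> = (\<Sum>r\<in>?R. \<Sum>s\<in>?R. \<Sum>b<d*p. \<Sum>b'<d*p. (if r = s then 3 * \<sigma>^4 else 0))
      + (\<Sum>r\<in>?R. \<Sum>s\<in>?R. \<Sum>b<d*p. \<Sum>b'<d*p. (if b = b' then 3 * \<sigma>^4 else 0))"
    by (simp only: sum.distrib)
  also have "\<dots> = 3 * \<sigma>^4 * (real (n*d) * real (d*p)^2 + real (n*d)^2 * real (d*p))"
    using sd1[of ?R "{..<d*p}" "3 * \<sigma>^4"] sd2[of ?R "{..<d*p}" "3 * \<sigma>^4"]
    by (simp add: card_cartesian_product algebra_simps)
  finally show "integral\<^sup>L ?M (Sfun d p n) \<le> 3 * \<sigma>^4 * (real (n*d) * real (d*p)^2 + real (n*d)^2 * real (d*p))" .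
qed


lemma one_orth: "1\<^sub>m d \<in> orth_group d"
  by (simp add: orth_group_def)

lemma event_sets:
  assumes "n > 0" "\<sigma> > 0"
  shows "{w \<in> space (PiM ({..<n}\<times>{..<d}\<times>{..<d*p}) (\<lambda>_. N0 \<sigma>)).
     (SUP Os \<in> {Os. \<forall>i<n. Os i \<in> orth_group d}. aligned_sq d p n Os w) \<le> t}
     \<in> sets (PiM ({..<n}\<times>{..<d}\<times>{..<d*p}) (\<lambda>_. N0 \<sigma>))"
proof -
  let ?I = "{..<n}\<times>{..<d}\<times>{..<d*p}"
  let ?M = "PiM ?I (\<lambda>_. N0 \<sigma>)"
  let ?O = "{Os. \<forall>i<n. Os i \<in> orth_group d}"
  define G where "G = (\<lambda>(Os :: nat \<Rightarrow> real mat) (v :: nat \<times> nat \<times> nat \<Rightarrow> real).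
     (\<Sum>a<d. \<Sum>b<d*p. ((1/real n) * (\<Sum>i<n. \<Sum>k<d. Os i $$ (k,a) * v (i,k,b)))\<^sup>2))"
  have eqG: "aligned_sq d p n Os v = G Os v" if "Os \<in> ?O" for Os v
    unfolding G_def using that by (intro aligned_sq_eq) (auto simp: orth_group_def)
  have "(\<lambda>i. 1\<^sub>m d) \<in> ?O" using one_orth by simp
  then have ne: "?O \<noteq> {}" by (metis empty_iff)
  have bdd: "bdd_above ((\<lambda>Os. aligned_sq d p n Os w) ` ?O)" for w
    using det_bound[OF _ assms(1)] by (auto intro!: bdd_aboveI2)
  have iff: "(SUP Os \<in> ?O. aligned_sq d p n Os w) \<le> t \<longleftrightarrow> (\<forall>Os\<in>?O. G Os w \<le> t)" for w
    using cSUP_le_iff[OF ne bdd[of w], of t] eqG by auto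
  define C where "C = (\<Inter>Os\<in>?O. {v. G Os v \<le> t})"
  have cont: "continuous_on UNIV (G Os)" for Os
  proof -
    have cc: "continuous_on UNIV (\<lambda>v::nat\<times>nat\<times>nat\<Rightarrow>real. v x)" for x
      by (rule continuous_on_product_coordinates)
    show ?thesis
      unfolding G_def
      apply (rule continuous_on_sum, rule continuous_on_sum)
      apply (rule continuous_on_power)
      apply (rule continuous_on_mult, rule continuous_on_const)
      apply (rule continuous_on_sum, rule continuous_on_sum)
      apply (rule continuous_on_mult, rule continuous_on_const)
      apply (rule cc)
      done
  qed
  have closedC: "closed C"
  proof -
    have cl: "closed {v. G Os v \<le> t}" for Os
      by (rule closed_Collect_le[OF cont continuous_on_const])
    show ?thesis unfolding C_def by (rule closed_INT) (intro ballI cl)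
  qed
  have idm: "(\<lambda>w. w) \<in> borel_measurable ?M"
  proof (rule measurable_coordinatewise_then_product)
    fix x :: "nat \<times> nat \<times> nat"
    show "(\<lambda>w. w x) \<in> borel_measurable ?M"
    proof (cases "x \<in> ?I")
      case True then show ?thesis by (rule comp_meas)
    next
      case False
      have "(\<lambda>w. w x) \<in> borel_measurable ?M \<longleftrightarrow> (\<lambda>w. undefined :: real) \<in> borel_measurable ?M"
      proof (rule Sigma_Algebra.measurable_cong)
        fix w assume "w \<in> space ?M"
        then have "w \<in> PiE ?I (\<lambda>_. space (N0 \<sigma>))" by (simp only: space_PiM)
        then show "w x = undefined" using False by (rule PiE_arb)
      qed
      then show ?thesis by simp
    qed
  qed
  have S1: "(\<lambda>w. w) -` C \<inter> space ?M \<in> sets ?M"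
    by (rule measurable_sets[OF idm borel_closed[OF closedC]])
  have S2: "w \<in> (\<lambda>w. w) -` C \<inter> space ?M \<longleftrightarrow> w \<in> {w \<in> space ?M. (SUP Os \<in> ?O. aligned_sq d p n Os w) \<le> t}" for w
  proof -
    have "w \<in> C \<longleftrightarrow> (\<forall>Os\<in>?O. G Os w \<le> t)" unfolding C_def by (simp only: INT_iff mem_Collect_eq)
    then show ?thesis using iff[of w] by (simp add: conj_commute)
  qed
  have S3: "(\<lambda>w. w) -` C \<inter> space ?M = {w \<in> space ?M. (SUP Os \<in> ?O. aligned_sq d p n Os w) \<le> t}"
    using S2 by blast
  show ?thesis using S1 S3 by simp
qed

lemma arithK:
  fixes d n p :: nat and \<epsilon> \<sigma> :: real
  assumes "d > 0" "n > 0" "p > 0" "\<epsilon> > 0" "18 * real d^3 / \<epsilon>\<^sup>2 < real n" "18 * real d^3 / \<epsilon>\<^sup>2 < real p"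
    "\<sigma> > 0" "\<sigma>\<^sup>2 = 1 / real (d*p)"
  shows "real d / real n * sqrt (3 * (3 * \<sigma>^4 * (real (n*d) * real (d*p)^2 + real (n*d)^2 * real (d*p)))) \<le> \<epsilon>"
proof -
  let ?X = "3 * (3 * \<sigma>^4 * (real (n*d) * real (d*p)^2 + real (n*d)^2 * real (d*p)))"
  have s4: "\<sigma>^4 = 1 / (real d * real p)^2"
    using assms(8) by (metis of_nat_mult power2_eq_square power_divide power4_eq_xxxx one_power2 mult.assoc)
  have dp: "real d > 0" "real p > 0" "real n > 0" using assms by auto
  have h: "(real d / real n)\<^sup>2 * ?X = 9 * (real d^3 / real n + real d^3 / real p)"
    using dp unfolding s4 by (simp add: field_simps power2_eq_square power3_eq_cube)
  have e2: "\<epsilon>\<^sup>2 > 0" using assms by simp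
  have a1: "real d^3 / real n < \<epsilon>\<^sup>2 / 18"
    using assms(5) dp e2 by (simp add: field_simps)
  have a2: "real d^3 / real p < \<epsilon>\<^sup>2 / 18"
    using assms(6) dp e2 by (simp add: field_simps)
  have "9 * (real d^3 / real n + real d^3 / real p) \<le> \<epsilon>\<^sup>2" using a1 a2 by (simp add: field_simps)
  then have "(real d / real n)\<^sup>2 * ?X \<le> \<epsilon>\<^sup>2" by (simp only: h)
  then have "sqrt ((real d / real n)\<^sup>2 * ?X) \<le> sqrt (\<epsilon>\<^sup>2)" by (rule real_sqrt_le_mono)
  moreover have "sqrt ((real d / real n)\<^sup>2 * ?X) = real d / real n * sqrt ?X"
    using dp by (simp add: real_sqrt_mult)
  ultimately show ?thesis using assms(4) by simp
qed

theorem lemma2: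
  fixes d :: nat and \<epsilon> :: real
  assumes "d > 0" and "\<epsilon> > 0"
  shows "\<exists>p0 n0 :: nat. \<forall>p n :: nat. p > p0 \<longrightarrow> n > n0 \<longrightarrow>
    (let M = gauss_field ({..<n} \<times> {..<d} \<times> {..<d * p}) (1 / real (d * p))
     in measure M {w \<in> space M.
          (SUP Os \<in> {Os. \<forall>i<n. Os i \<in> orth_group d}. aligned_sq d p n Os w)
            \<le> real d / real p * (alpha_R d)\<^sup>2 + \<epsilon>} > 1 / 2)"
proof -
  define K :: nat where "K = nat \<lceil>18 * real d ^ 3 / \<epsilon>\<^sup>2\<rceil>"
  have Kb: "18 * real d ^ 3 / \<epsilon>\<^sup>2 \<le> real K"
    unfolding K_def by (rule real_nat_ceiling_ge)
  show ?thesis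
  proof (intro exI allI impI)
    fix p n :: nat
    assume hp: "p > K" and hn: "n > K"
    have pn: "p > 0" "n > 0" using hp hn by auto
    have lp: "18 * real d ^ 3 / \<epsilon>\<^sup>2 < real p" using Kb hp by linarith
    have ln: "18 * real d ^ 3 / \<epsilon>\<^sup>2 < real n" using Kb hn by linarith
    define \<sigma> where "\<sigma> = sqrt (1 / real (d*p))"
    have dp0: "real (d*p) > 0" using assms(1) pn by simp
    have \<sigma>pos: "\<sigma> > 0" unfolding \<sigma>_def using dp0 by simp
    have \<sigma>2: "\<sigma>\<^sup>2 = 1 / real (d*p)" unfolding \<sigma>_def using dp0 by simp
    let ?I = "{..<n} \<times> {..<d} \<times> {..<d * p}"
    let ?O = "{Os. \<forall>i<n. Os i \<in> orth_group d}"
    define t where "t = real d / real p * (alpha_R d)\<^sup>2 + \<epsilon>"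
    define M where "M = PiM ?I (\<lambda>_. N0 \<sigma>)"
    have Meq: "gauss_field ?I (1 / real (d * p)) = M"
      unfolding M_def gauss_field_def N0_def \<sigma>_def by simp
    interpret P: prob_space M
      unfolding M_def by (rule prob_space_PiM) (rule N0_prob[OF \<sigma>pos])
    define B0 where "B0 = 3 * \<sigma>^4 * (real (n*d) * real (d*p)^2 + real (n*d)^2 * real (d*p))"
    have B0pos: "B0 > 0" unfolding B0_def using \<sigma>pos pn assms(1)
      by (intro mult_pos_pos add_pos_pos zero_less_power) auto
    define c where "c = 3 * B0"
    have cpos: "c > 0" unfolding c_def using B0pos by simp
    have intS: "integrable M (Sfun d p n)" unfolding M_def by (rule ES_bound(1)[OF \<sigma>pos])
    have ES: "integral\<^sup>L M (Sfun d p n) \<le> B0" unfolding M_def B0_def by (rule ES_bound(2)[OF \<sigma>pos])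
    have Snn: "Sfun d p n w \<ge> 0" for w unfolding Sfun_def by (intro sum_nonneg) auto
    have Sm[measurable]: "Sfun d p n \<in> borel_measurable M" using intS by (rule borel_measurable_integrable)
    define L where "L = {w \<in> space M. c \<le> Sfun d p n w}"
    have Lsets: "L \<in> sets M" unfolding L_def by measurable
    have "measure M L \<le> integral\<^sup>L M (Sfun d p n) / c"
      unfolding L_def by (rule integral_Markov_inequality_measure[OF intS _ _ cpos, of "space M"]) (auto simp: Snn)
    also have "\<dots> \<le> B0 / c" using ES cpos by (simp add: divide_right_mono)
    also have "\<dots> = 1 / 3" unfolding c_def using B0pos by simp
    finally have mL: "measure M L \<le> 1 / 3" .
    have mC: "measure M (space M - L) \<ge> 2 / 3"
      using P.prob_compl[OF Lsets] mL by simp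
    define E where "E = {w \<in> space M. (SUP Os \<in> ?O. aligned_sq d p n Os w) \<le> t}"
    have Esets: "E \<in> sets M" unfolding E_def M_def by (rule event_sets[OF pn(2) \<sigma>pos])
    have bound: "real d / real n * sqrt c \<le> \<epsilon>"
      unfolding c_def B0_def by (rule arithK[OF assms(1) pn(2) pn(1) assms(2) ln lp \<sigma>pos \<sigma>2])
    have te: "\<epsilon> \<le> t" unfolding t_def by simp
    have sub: "space M - L \<subseteq> E"
    proof
      fix w assume w: "w \<in> space M - L"
      then have Sc: "Sfun d p n w < c" unfolding L_def by auto
      have "(\<lambda>i. 1\<^sub>m d) \<in> ?O" using one_orth by simp
      then have ne: "?O \<noteq> {}" by (metis empty_iff)
      have "aligned_sq d p n Os w \<le> t" if "Os \<in> ?O" for Os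
      proof -
        have "aligned_sq d p n Os w \<le> real d / real n * sqrt (Sfun d p n w)"
          using that pn by (intro det_bound) auto
        also have "\<dots> \<le> real d / real n * sqrt c"
          using Sc by (intro mult_left_mono real_sqrt_le_mono) auto
        finally show ?thesis using bound te by linarith
      qed
      then have "(SUP Os \<in> ?O. aligned_sq d p n Os w) \<le> t"
        by (intro cSUP_least ne) auto
      then show "w \<in> E" unfolding E_def using w by auto
    qed
    have "measure M E \<ge> measure M (space M - L)"
      by (rule P.finite_measure_mono[OF sub Esets])
    then have "measure M E > 1 / 2" using mC by linarith
    then show "(let M = gauss_field ?I (1 / real (d * p))
     in measure M {w \<in> space M.
          (SUP Os \<in> ?O. aligned_sq d p n Os w)
            \<le> real d / real p * (alpha_R d)\<^sup>2 + \<epsilon>} > 1 / 2)"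
      unfolding Meq Let_def E_def t_def .
  qed
qed

end
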